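(* Let $P\subseteq[0,1]^d$ be a $d$-dimensional $0/1$-polytope. Then its number of facets satisfies $f_{d-1}(P)\le 2d+d!\,(1-\mathrm{Vol}_d(P))$, where $\mathrm{Vol}_d$ denotes $d$-dimensional Lebesgue volume.
   Context: A $0/1$-polytope is the convex hull of a subset of $\{0,1\}^d$; $f_{d-1}(P)$ is the number of facets of $P$. *)

theory Defs
  imports "HOL-Analysis.Analysis"
begin

definition cube01 :: "(real ^ 'n) set" where
  "cube01 = {x. \<forall>i. x $ i = 0 \<or> x $ i = 1}"

definition zero_one_polytope :: "(real ^ 'n) set \<Rightarrow> bool" where
  "zero_one_polytope P \<longleftrightarrow> (\<exists>V. V \<subseteq> cube01 \<and> P = convex hull V)"

end

theory Submission
  imports Defs
begin


typedef ('a::finite) wo = "UNIV :: 'a set" by simp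

definition enc :: "'a::finite \<Rightarrow> nat" where
  "enc = (SOME f. inj f)"

lemma inj_enc: "inj (enc :: 'a::finite \<Rightarrow> nat)"
proof -
  obtain f :: "'a \<Rightarrow> nat" and n where "f ` UNIV = {..<n}" "inj_on f UNIV"
    using finite_imp_inj_to_nat_seg[OF finite_class.finite_UNIV] by blast
  then have "\<exists>f::'a \<Rightarrow> nat. inj f" by blast
  then show ?thesis unfolding enc_def by (rule someI_ex)
qed

instance wo :: (finite) finite
proof
  have "UNIV = Abs_wo ` UNIV" using type_definition.Abs_image[OF type_definition_wo] by auto
  then show "finite (UNIV :: 'a wo set)" by (metis finite_class.finite_UNIV finite_imageI)
qed

instantiation wo :: (finite) linorder
begin
definition less_eq_wo :: "'a wo \<Rightarrow> 'a wo \<Rightarrow> bool" where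
  "less_eq_wo x y \<longleftrightarrow> enc (Rep_wo x) \<le> enc (Rep_wo y)"
definition less_wo :: "'a wo \<Rightarrow> 'a wo \<Rightarrow> bool" where
  "less_wo x y \<longleftrightarrow> enc (Rep_wo x) < enc (Rep_wo y)"
instance
proof
  fix x y :: "'a wo"
  show "x \<le> y \<Longrightarrow> y \<le> x \<Longrightarrow> x = y"
    unfolding less_eq_wo_def using inj_enc Rep_wo_inject
    by (metis antisym injD)
qed (auto simp: less_eq_wo_def less_wo_def)
end

instance wo :: (finite) wellorder
proof
  fix P :: "'a wo \<Rightarrow> bool" and a
  assume H: "\<And>x. (\<And>y. y < x \<Longrightarrow> P y) \<Longrightarrow> P x"
  show "P a"
  proof (induction "enc (Rep_wo a)" arbitrary: a rule: less_induct)
    case less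
    then show ?case using H by (auto simp: less_wo_def)
  qed
qed

lemma card_wo: "CARD('a::finite wo) = CARD('a)"
  by (metis Abs_wo_inject UNIV_I bij_betw_def card_image inj_onI type_definition.Abs_image[OF type_definition_wo])



definition phi :: "real^'n::finite \<Rightarrow> real^('n wo)" where
  "phi x = (\<chi> j. x $ Rep_wo j)"
definition psi :: "real^('n::finite wo) \<Rightarrow> real^'n" where
  "psi y = (\<chi> i. y $ Abs_wo i)"

lemma psi_phi[simp]: "psi (phi x) = x" by (simp add: phi_def psi_def Abs_wo_inverse)
lemma phi_psi[simp]: "phi (psi y) = y" by (simp add: phi_def psi_def Rep_wo_inverse)

lemma linear_phi: "linear phi"
  by (auto simp: linear_iff phi_def vec_eq_iff)
lemma linear_psi: "linear psi"
  by (auto simp: linear_iff psi_def vec_eq_iff)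

lemma prod_Basis_cart: "(\<Prod>b\<in>Basis. (v::real^'k) \<bullet> b) = (\<Prod>i\<in>UNIV. v $ i)"
proof -
  have "(\<Prod>b\<in>Basis. v \<bullet> b) = (\<Prod>b\<in>(\<lambda>i. axis i (1::real)) ` UNIV. v \<bullet> b)"
    by (simp add: Basis_vec_def UNION_singleton_eq_range)
  also have "\<dots> = (\<Prod>i\<in>UNIV. v \<bullet> axis i 1)"
    by (subst prod.reindex) (auto simp: inj_on_def axis_eq_axis)
  finally show ?thesis by (simp add: inner_axis)
qed

lemma bij_Rep_wo: "bij_betw Rep_wo UNIV (UNIV::'n::finite set)"
  by (metis bij_betw_def inj_on_def Rep_wo_inject type_definition.Rep_range[OF type_definition_wo])

lemma lborel_psi: "lborel = distr (lborel :: (real^('n::finite wo)) measure) borel psi"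
proof (rule lborel_eqI)
  fix l u :: "real^'n"
  assume le: "\<And>b. b \<in> Basis \<Longrightarrow> l \<bullet> b \<le> u \<bullet> b"
  have lu: "l $ i \<le> u $ i" for i using le[of "axis i 1"] by (auto simp: Basis_vec_def inner_axis)
  have [measurable]: "psi \<in> borel_measurable borel"
    using linear_psi by (intro borel_measurable_continuous_onI linear_continuous_on linear_conv_bounded_linear[THEN iffD1]) auto
  have eq: "psi -` box l u = box (phi l) (phi u)"
  proof (intro set_eqI)
    fix x :: "real^'n wo"
    have A: "x \<in> psi -` box l u \<longleftrightarrow> (\<forall>i. l$i < x $ Abs_wo i \<and> x $ Abs_wo i < u$i)"
      by (simp add: mem_box_cart psi_def)
    have B: "x \<in> box (phi l) (phi u) \<longleftrightarrow> (\<forall>j. l $ Rep_wo j < x$j \<and> x$j < u $ Rep_wo j)"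
      by (simp add: mem_box_cart phi_def)
    have C: "(\<forall>i. l$i < x $ Abs_wo i \<and> x $ Abs_wo i < u$i) \<longleftrightarrow> (\<forall>j. l $ Rep_wo j < x$j \<and> x$j < u $ Rep_wo j)"
    proof
      assume H: "\<forall>i. l$i < x $ Abs_wo i \<and> x $ Abs_wo i < u$i"
      show "\<forall>j. l $ Rep_wo j < x$j \<and> x$j < u $ Rep_wo j"
      proof
        fix j show "l $ Rep_wo j < x$j \<and> x$j < u $ Rep_wo j"
          using H[rule_format, of "Rep_wo j"] by (simp add: Rep_wo_inverse)
      qed
    next
      assume H: "\<forall>j. l $ Rep_wo j < x$j \<and> x$j < u $ Rep_wo j"
      show "\<forall>i. l$i < x $ Abs_wo i \<and> x $ Abs_wo i < u$i"
      proof
        fix i show "l$i < x $ Abs_wo i \<and> x $ Abs_wo i < u$i"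
          using H[rule_format, of "Abs_wo i"] by (simp add: Abs_wo_inverse)
      qed
    qed
    show "x \<in> psi -` box l u \<longleftrightarrow> x \<in> box (phi l) (phi u)"
      using A B C by blast
  qed
  have "emeasure (distr lborel borel psi) (box l u) = emeasure lborel (box (phi l) (phi u))"
    by (simp add: emeasure_distr eq)
  also have "\<dots> = (\<Prod>j\<in>UNIV. u $ Rep_wo j - l $ Rep_wo j)"
  proof -
    have "\<forall>b\<in>Basis. phi l \<bullet> b \<le> phi u \<bullet> b"
      using lu by (auto simp: Basis_vec_def inner_axis phi_def)
    then have "emeasure lborel (box (phi l) (phi u)) = ennreal (\<Prod>b\<in>Basis. (phi u - phi l) \<bullet> b)"
      apply (subst emeasure_lborel_box_eq)
      apply (subst if_P)
       apply assumption
      apply (rule refl)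
      done
    also have "(\<Prod>b\<in>Basis. (phi u - phi l) \<bullet> b) = (\<Prod>j\<in>UNIV. u $ Rep_wo j - l $ Rep_wo j)"
      unfolding prod_Basis_cart by (simp add: phi_def)
    finally show ?thesis .
  qed
  also have "(\<Prod>j\<in>UNIV. u $ Rep_wo j - l $ Rep_wo j) = (\<Prod>i\<in>UNIV. u $ i - l $ i)"
    by (rule prod.reindex_bij_betw[OF bij_Rep_wo])
  finally show "emeasure (distr lborel borel psi) (box l u) = (\<Prod>b\<in>Basis. (u - l) \<bullet> b)"
    by (simp add: prod_Basis_cart)
qed simp

lemma measure_phi:
  fixes S :: "(real^'n::finite) set"
  assumes "compact S"
  shows "measure lebesgue (phi ` S) = measure lebesgue S"
proof -
  have [measurable]: "psi \<in> borel_measurable borel"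
    using linear_psi by (intro borel_measurable_continuous_onI linear_continuous_on linear_conv_bounded_linear[THEN iffD1]) auto
  have Sb: "S \<in> sets borel" using assms compact_imp_closed borel_closed by blast
  have cpt: "compact (phi ` S)"
    using assms linear_phi by (intro compact_continuous_image linear_continuous_on linear_conv_bounded_linear[THEN iffD1]) auto
  have Tb: "phi ` S \<in> sets borel" using cpt compact_imp_closed borel_closed by blast
  have pre: "psi -` S = phi ` S"
  proof (intro set_eqI iffI)
    fix x assume "x \<in> psi -` S"
    then have "psi x \<in> S" by simp
    then show "x \<in> phi ` S" using phi_psi[of x] by (metis image_eqI)
  next
    fix x assume "x \<in> phi ` S"
    then show "x \<in> psi -` S" by auto
  qed
  have "measure lborel S = measure (distr (lborel :: (real^('n wo)) measure) borel psi) S"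
    by (subst lborel_psi[where 'n='n]) simp
  also have "\<dots> = measure lborel (phi ` S)"
    using Sb by (simp add: measure_distr pre)
  finally show ?thesis
    using Sb Tb by (simp add: measure_completion)
qed



lemma det_Ints:
  fixes A :: "real^'k::finite^'k"
  assumes "\<And>i j. A$i$j \<in> \<int>"
  shows "det A \<in> \<int>"
  unfolding det_def by (intro Ints_sum Ints_mult Ints_prod) (auto simp: assms)

lemma simplex_vol:
  fixes X :: "(real^'n::finite) set"
  assumes fin: "finite X" and card: "card X = Suc CARD('n)"
    and ind: "\<not> affine_dependent X" and sub: "X \<subseteq> cube01"
  shows "1 / fact CARD('n) \<le> measure lebesgue (convex hull X)"
proof -
  have "X \<noteq> {}" using card by auto
  then obtain x0 where x0: "x0 \<in> X" by blast
  define Y where "Y = phi ` X"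
  have injphi: "inj phi" by (metis injI psi_phi)
  have finY: "finite Y" using fin by (simp add: Y_def)
  have cardY: "card Y = Suc CARD('n wo)"
  proof -
    have "inj_on phi X" using injphi by (rule inj_on_subset) simp
    then have "card Y = card X" unfolding Y_def by (rule card_image)
    then show ?thesis using card by (simp add: card_wo)
  qed
  have y0: "phi x0 \<in> Y" using x0 by (simp add: Y_def)
  have "card (Y - {phi x0}) = CARD('n wo)" using cardY y0 finY by simp
  then obtain f where bij: "bij_betw f (UNIV::'n wo set) (Y - {phi x0})"
    using finite_same_card_bij[of "UNIV::'n wo set" "Y - {phi x0}"] finY by auto
  define M where "M = (\<chi> i. \<chi> j. f j $ i - phi x0 $ i)"
  have cont: "measure lborel (convex hull Y) = \<bar>det M\<bar> / fact CARD('n wo)"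
    unfolding M_def by (rule content_simplex[OF finY cardY y0 bij])
  have hull: "convex hull Y = phi ` (convex hull X)"
    unfolding Y_def by (rule convex_hull_linear_image[OF linear_phi, symmetric])
  have cpt: "compact (convex hull X)" using fin by (rule finite_imp_compact_convex_hull)
  have cptY: "compact (convex hull Y)" using finY by (rule finite_imp_compact_convex_hull)
  have m: "measure lebesgue (convex hull X) = measure lborel (convex hull Y)"
  proof -
    have "measure lebesgue (convex hull X) = measure lebesgue (convex hull Y)"
      using measure_phi[OF cpt] hull by simp
    also have "\<dots> = measure lborel (convex hull Y)"
    proof -
      have "convex hull Y \<in> sets borel" using cptY compact_imp_closed borel_closed by blast
      then show ?thesis by (simp add: measure_completion)
    qed
    finally show ?thesis .
  qed
  have pos: "measure lebesgue (convex hull X) > 0"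
  proof -
    have "aff_dim X = int CARD('n)" using ind card by (simp add: affine_independent_iff_card)
    then have "affine hull X = UNIV" using aff_dim_eq_full[of X] by simp
    then have "affine hull (convex hull X) = UNIV" by (simp add: affine_hull_convex_hull)
    then have "rel_interior (convex hull X) = interior (convex hull X)" by (rule rel_interior_interior)
    moreover have "rel_interior (convex hull X) \<noteq> {}"
      using \<open>X \<noteq> {}\<close> by (simp add: rel_interior_eq_empty convex_convex_hull)
    ultimately have "interior (convex hull X) \<noteq> {}" by simp
    then have "\<not> negligible (convex hull X)"
      by (simp add: negligible_convex_interior convex_convex_hull)
    then have "measure lebesgue (convex hull X) \<noteq> 0"
      using negligible_iff_measure0[OF lmeasurable_compact[OF cpt]] by simp
    then show ?thesis using measure_nonneg[of lebesgue "convex hull X"] by linarith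
  qed
  have coord: "y \<in> Y \<Longrightarrow> y $ i \<in> \<int>" for y i
  proof -
    assume "y \<in> Y"
    then obtain x where "x \<in> X" "y = phi x" by (auto simp: Y_def)
    then have "x \<in> cube01" using sub by blast
    then have "x $ Rep_wo i = 0 \<or> x $ Rep_wo i = 1" by (simp add: cube01_def)
    then show "y $ i \<in> \<int>" using \<open>y = phi x\<close> by (auto simp: phi_def)
  qed
  have fY: "f j \<in> Y" for j using bij by (auto simp: bij_betw_def)
  have "det M \<in> \<int>"
  proof (rule det_Ints)
    fix i j
    have "f j $ i \<in> \<int>" "phi x0 $ i \<in> \<int>" using coord fY y0 by blast+
    then show "M$i$j \<in> \<int>" unfolding M_def by (simp only: vec_lambda_beta Ints_diff)
  qed
  then obtain k where k: "det M = of_int k" by (auto elim: Ints_cases)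
  have "det M \<noteq> 0" using pos m cont by auto
  then have "k \<noteq> 0" using k by auto
  then have "\<bar>det M\<bar> \<ge> 1" using k by linarith
  then have "1 / fact CARD('n) \<le> \<bar>det M\<bar> / fact CARD('n)"
    by (intro divide_right_mono) auto
  then show ?thesis using m cont by (simp only: card_wo)
qed



lemma finite_cube01: "finite (cube01 :: (real^'n::finite) set)"
proof -
  have "(cube01 :: (real^'n) set) \<subseteq> (\<lambda>f. \<chi> i. f i) ` (PiE UNIV (\<lambda>_. {0::real,1}))"
  proof
    fix x :: "real^'n" assume "x \<in> cube01"
    then have "(\<lambda>i. x$i) \<in> PiE UNIV (\<lambda>_. {0::real,1})" by (auto simp: cube01_def)
    then show "x \<in> (\<lambda>f. \<chi> i. f i) ` (PiE UNIV (\<lambda>_. {0::real,1}))"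
      by (rule image_eqI[rotated]) simp
  qed
  moreover have "finite ((\<lambda>f. \<chi> i. f i) ` (PiE UNIV (\<lambda>_. {0::real,1})) :: (real^'n) set)"
    by (intro finite_imageI finite_PiE) auto
  ultimately show ?thesis by (rule finite_subset)
qed

lemma cube01_box: "cube01 \<subseteq> cbox 0 (1 :: real^'n::finite)"
proof (intro subsetI)
  fix x :: "real^'n" assume "x \<in> cube01"
  then have h: "x$i = 0 \<or> x$i = 1" for i by (simp add: cube01_def)
  show "x \<in> cbox 0 1" unfolding mem_box_cart
  proof (intro allI conjI)
    fix i
    show "(0::real^'n) $ i \<le> x $ i" using h[of i] by auto
    show "x $ i \<le> (1::real^'n) $ i" using h[of i] by auto
  qed
qed

lemma measure_unit_cube: "measure lebesgue (cbox 0 (1 :: real^'n::finite)) = 1"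
proof -
  have "(0::real^'n) \<in> cbox 0 1" by (simp add: mem_box_cart)
  then have "measure lborel (cbox 0 (1::real^'n)) = 1"
    using content_cbox_cart[of "0::real^'n" 1] by auto
  then show ?thesis by (simp add: measure_completion)
qed

lemma facet_cube_unique:
  fixes P :: "(real^'n::finite) set"
  assumes cP: "convex P" and full: "aff_dim P = int CARD('n)"
    and box: "P \<subseteq> cbox 0 1"
    and F: "F facet_of P" and G: "G facet_of P"
    and Fs: "F \<subseteq> {x. x$i = c}" and Gs: "G \<subseteq> {x. x$i = c}" and c: "c = 0 \<or> c = 1"
  shows "F = G"
proof -
  obtain a b where a0: "a \<noteq> 0" and le: "\<And>x. x \<in> P \<Longrightarrow> a \<bullet> x \<le> b"
      and hyp: "{x. a \<bullet> x = b} = {x. x$i = c}"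
  proof (cases "c = 0")
    case True
    show ?thesis
    proof (rule that[of "- axis i 1" 0])
      show "- axis i (1::real) \<noteq> 0" by (simp add: axis_eq_0_iff)
      show "- axis i 1 \<bullet> x \<le> 0" if "x \<in> P" for x
        using box that by (auto simp: mem_box_cart inner_axis')
      show "{x. - axis i 1 \<bullet> x = 0} = {x. x $ i = c}" using True by (auto simp: inner_axis')
    qed
  next
    case False
    then have c1: "c = 1" using c by simp
    show ?thesis
    proof (rule that[of "axis i 1" 1])
      show "axis i (1::real) \<noteq> 0" by (simp add: axis_eq_0_iff)
      show "axis i 1 \<bullet> x \<le> 1" if "x \<in> P" for x
        using box that by (auto simp: mem_box_cart inner_axis')
      show "{x. axis i 1 \<bullet> x = 1} = {x. x $ i = c}" using c1 by (auto simp: inner_axis')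
    qed
  qed
  define E where "E = P \<inter> {x. a \<bullet> x = b}"
  have EP: "E face_of P" unfolding E_def using cP le by (rule face_of_Int_supporting_hyperplane_le)
  have "E \<noteq> P"
  proof
    assume "E = P"
    then have "P \<subseteq> {x. a \<bullet> x = b}" unfolding E_def by blast
    then have "aff_dim P \<le> aff_dim {x. a \<bullet> x = b}" by (rule aff_dim_subset)
    also have "\<dots> = int (CARD('n) - 1)" using a0 by (simp add: aff_dim_hyperplane)
    finally show False using full by simp
  qed
  then have ltE: "aff_dim E < aff_dim P" using face_of_aff_dim_lt[OF cP EP] by blast
  have cE: "convex E" using EP face_of_imp_convex by blast
  have key: "H = E" if H: "H facet_of P" and Hs: "H \<subseteq> {x. x$i = c}" for H
  proof (rule ccontr)
    assume ne: "H \<noteq> E"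
    have HP: "H face_of P" "H \<subseteq> P" using H by (auto simp: facet_of_def face_of_imp_subset)
    have "H \<subseteq> E" using HP Hs hyp unfolding E_def by blast
    then have "H face_of E" using HP face_of_subset[of H P E] EP face_of_imp_subset by blast
    then have "aff_dim H < aff_dim E" using face_of_aff_dim_lt[OF cE] ne by blast
    moreover have "aff_dim H = aff_dim P - 1" using H by (simp add: facet_of_def)
    ultimately show False using ltE by simp
  qed
  show ?thesis using key[OF F Fs] key[OF G Gs] by simp
qed

lemma exists_beyond:
  fixes P :: "(real^'n::finite) set"
  assumes V: "V \<subseteq> cube01" and P: "P = convex hull V" and F: "F facet_of P"
    and a0: "a \<noteq> 0" and Fh: "F \<subseteq> {x. a \<bullet> x = b}"
    and le: "\<And>w. w \<in> cube01 \<Longrightarrow> a \<bullet> w \<le> b"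
  shows "\<exists>i c. (c = 0 \<or> c = 1) \<and> F \<subseteq> {x. x$i = c}"
proof -
  have "finite V" using finite_subset[OF V finite_cube01] .
  then have "compact V" by (rule finite_imp_compact)
  have "F face_of convex hull V" using F P facet_of_imp_face_of by blast
  then obtain S' where S'V: "S' \<subseteq> V" and FS: "F = convex hull S'"
    using face_of_convex_hull_subset[OF \<open>compact V\<close>] by metis
  have S'F: "S' \<subseteq> F" unfolding FS by (rule hull_subset)
  have onH: "\<And>w. w \<in> S' \<Longrightarrow> a \<bullet> w = b" using S'F Fh by blast
  have inC: "\<And>w. w \<in> S' \<Longrightarrow> w \<in> cube01" using S'V V by blast
  obtain i where ai: "a $ i \<noteq> 0" using a0 by (metis vec_eq_iff zero_index)
  have convc: "convex {x::real^'n. x$i = c}" for c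
  proof -
    have "{x::real^'n. x$i = c} = {x. axis i 1 \<bullet> x = c}" by (auto simp: inner_axis')
    then show ?thesis using convex_hyperplane by metis
  qed
  show ?thesis
  proof (cases "a $ i > 0")
    case True
    have "w $ i = 1" if w: "w \<in> S'" for w
    proof (rule ccontr)
      assume "w $ i \<noteq> 1"
      then have w0: "w $ i = 0" using inC[OF w] by (auto simp: cube01_def)
      define w' where "w' = w + axis i 1"
      have wc: "w $ j = 0 \<or> w $ j = 1" for j using inC[OF w] by (simp add: cube01_def)
      have w'j: "w' $ j = (if j = i then 1 else w $ j)" for j using w0 by (simp add: w'_def axis_def)
      have "w' \<in> cube01" unfolding cube01_def mem_Collect_eq
      proof
        fix j show "w' $ j = 0 \<or> w' $ j = 1" using wc[of j] w'j[of j] by (cases "j = i") auto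
      qed
      moreover have "a \<bullet> w' = b + a $ i" using onH[OF w] by (simp add: w'_def inner_add_right inner_axis)
      ultimately show False using le[of w'] True by linarith
    qed
    then have "S' \<subseteq> {x. x$i = 1}" by blast
    then have "F \<subseteq> {x. x$i = 1}" unfolding FS by (rule hull_minimal) (rule convc)
    then show ?thesis by blast
  next
    case False
    then have neg: "a $ i < 0" using ai by simp
    have "w $ i = 0" if w: "w \<in> S'" for w
    proof (rule ccontr)
      assume "w $ i \<noteq> 0"
      then have w1: "w $ i = 1" using inC[OF w] by (auto simp: cube01_def)
      define w' where "w' = w - axis i 1"
      have wc: "w $ j = 0 \<or> w $ j = 1" for j using inC[OF w] by (simp add: cube01_def)
      have w'j: "w' $ j = (if j = i then 0 else w $ j)" for j using w1 by (simp add: w'_def axis_def)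
      have "w' \<in> cube01" unfolding cube01_def mem_Collect_eq
      proof
        fix j show "w' $ j = 0 \<or> w' $ j = 1" using wc[of j] w'j[of j] by (cases "j = i") auto
      qed
      moreover have "a \<bullet> w' = b - a $ i" using onH[OF w] by (simp add: w'_def inner_diff_right inner_axis)
      ultimately show False using le[of w'] neg by linarith
    qed
    then have "S' \<subseteq> {x. x$i = 0}" by blast
    then have "F \<subseteq> {x. x$i = 0}" unfolding FS by (rule hull_minimal) (rule convc)
    then show ?thesis by blast
  qed
qed

lemma pyramid_vol:
  fixes P :: "(real^'n::finite) set"
  assumes V: "V \<subseteq> cube01" and P: "P = convex hull V" and F: "F facet_of P"
    and full: "aff_dim P = int CARD('n)"
    and Fh: "F \<subseteq> {x. a \<bullet> x = b}" and w: "w \<in> cube01" and wb: "a \<bullet> w > b"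
  shows "1 / fact CARD('n) \<le> measure lebesgue (convex hull (insert w F))"
proof -
  have "finite V" using finite_subset[OF V finite_cube01] .
  then have "compact V" by (rule finite_imp_compact)
  have "F face_of convex hull V" using F P facet_of_imp_face_of by blast
  then obtain S' where S'V: "S' \<subseteq> V" and FS: "F = convex hull S'"
    using face_of_convex_hull_subset[OF \<open>compact V\<close>] by metis
  have finS': "finite S'" using finite_subset[OF S'V \<open>finite V\<close>] .
  have S'F: "S' \<subseteq> F" unfolding FS by (rule hull_subset)
  have "aff_dim F = aff_dim P - 1" using F by (simp add: facet_of_def)
  then have dS': "aff_dim S' = int CARD('n) - 1" using FS full by (simp add: aff_dim_convex_hull)
  obtain B where BS': "B \<subseteq> S'" and indB: "\<not> affine_dependent B" and hB: "affine hull S' = affine hull B"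
    using affine_basis_exists[of S'] by blast
  have "aff_dim B = aff_dim S'" using hB by (metis aff_dim_affine_hull)
  then have cB: "card B = CARD('n)" using indB dS' by (simp add: affine_independent_iff_card)
  have finB: "finite B" using indB by (simp add: affine_independent_iff_card)
  have "affine hull B \<subseteq> {x. a \<bullet> x = b}"
    unfolding hB[symmetric] using S'F Fh by (intro hull_minimal) (auto simp: affine_hyperplane)
  then have wnot: "w \<notin> affine hull B" using wb by auto
  then have wB: "w \<notin> B" using hull_subset[of B affine] by blast
  define X where "X = insert w B"
  have indX: "\<not> affine_dependent X" unfolding X_def using indB wnot by (rule affine_independent_insert)
  have cX: "card X = Suc CARD('n)" using cB finB wB by (simp add: X_def)
  have finX: "finite X" using finB by (simp add: X_def)
  have subX: "X \<subseteq> cube01" using w BS' S'V V by (auto simp: X_def)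
  have vol: "1 / fact CARD('n) \<le> measure lebesgue (convex hull X)"
    using simplex_vol[OF finX cX indX subX] .
  have sub: "convex hull X \<subseteq> convex hull (insert w F)"
    unfolding X_def using BS' S'F by (intro hull_mono) auto
  have "compact F" unfolding FS using finS' by (rule finite_imp_compact_convex_hull)
  then have cQ: "compact (convex hull (insert w F))" by (intro compact_convex_hull compact_insert)
  have "measure lebesgue (convex hull X) \<le> measure lebesgue (convex hull (insert w F))"
  proof (rule measure_mono_fmeasurable[OF sub])
    show "convex hull X \<in> sets lebesgue"
      using lmeasurable_compact[OF finite_imp_compact_convex_hull[OF finX]] by (rule fmeasurableD)
    show "convex hull insert w F \<in> lmeasurable" using cQ by (rule lmeasurable_compact)
  qed
  then show ?thesis using vol by linarith
qed



lemma same_apex: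
  fixes P F G :: "(real^'n::finite) set"
  assumes cF: "convex F" and cG: "convex G" and neF: "F \<noteq> {}" and neG: "G \<noteq> {}"
    and FP: "F = P \<inter> {x. aF \<bullet> x = bF}" and GP: "G = P \<inter> {x. aG \<bullet> x = bG}"
    and PF: "P \<subseteq> {x. aF \<bullet> x \<le> bF}" and PG: "P \<subseteq> {x. aG \<bullet> x \<le> bG}"
    and vF: "aF \<bullet> v > bF" and vG: "aG \<bullet> v > bG" and ne: "F \<noteq> G"
  shows "negligible (convex hull (insert v F) \<inter> convex hull (insert v G))"
proof -
  define al where "al = aG \<bullet> v - bG"
  define be where "be = aF \<bullet> v - bF"
  define c where "c = al *\<^sub>R aF - be *\<^sub>R aG"
  define e where "e = al * bF - be * bG"
  have alp: "al > 0" using vG by (simp add: al_def)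
  have bep: "be > 0" using vF by (simp add: be_def)
  have cx: "c \<bullet> x = al * (aF \<bullet> x) - be * (aG \<bullet> x)" for x
    unfolding c_def by (simp add: inner_diff_left)
  have cv: "c \<bullet> v = e" unfolding cx e_def al_def be_def by (simp add: algebra_simps)
  have c0: "c \<noteq> 0"
  proof
    assume c0: "c = 0"
    then have e0: "e = 0" using cv by simp
    have eqv: "aF \<bullet> x = bF \<longleftrightarrow> aG \<bullet> x = bG" for x
    proof -
      have 1: "al * (aF \<bullet> x) = be * (aG \<bullet> x)" using cx[of x] c0 by simp
      have 2: "al * bF = be * bG" using e0 by (simp add: e_def)
      have "aF \<bullet> x = bF \<longleftrightarrow> al * (aF \<bullet> x) = al * bF" using alp by simp
      also have "\<dots> \<longleftrightarrow> be * (aG \<bullet> x) = be * bG" using 1 2 by simp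
      also have "\<dots> \<longleftrightarrow> aG \<bullet> x = bG" using bep by simp
      finally show ?thesis .
    qed
    have "F = G" unfolding FP GP using eqv by blast
    with ne show False ..
  qed
  have hF: "convex hull F = F" using cF by (simp add: convex_hull_eq)
  have hG: "convex hull G = G" using cG by (simp add: convex_hull_eq)
  have sub: "convex hull (insert v F) \<inter> convex hull (insert v G) \<subseteq> {x. c \<bullet> x = e}"
  proof
    fix y assume y: "y \<in> convex hull (insert v F) \<inter> convex hull (insert v G)"
    obtain s1 t1 f where s1: "s1 \<ge> 0" "t1 \<ge> 0" "s1 + t1 = 1" and f: "f \<in> F"
        and y1: "y = s1 *\<^sub>R v + t1 *\<^sub>R f"
      using y unfolding convex_hull_insert[OF neF] hF by blast
    obtain s2 t2 g where s2: "s2 \<ge> 0" "t2 \<ge> 0" "s2 + t2 = 1" and g: "g \<in> G"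
        and y2: "y = s2 *\<^sub>R v + t2 *\<^sub>R g"
      using y unfolding convex_hull_insert[OF neG] hG by blast
    have fF: "aF \<bullet> f = bF" "aG \<bullet> f \<le> bG" using f FP PG by auto
    have gG: "aG \<bullet> g = bG" "aF \<bullet> g \<le> bF" using g GP PF by auto
    have yG1: "aG \<bullet> y = s1 * (aG \<bullet> v) + t1 * (aG \<bullet> f)" unfolding y1 by (simp add: inner_add_right)
    have yG2: "aG \<bullet> y = s2 * (aG \<bullet> v) + t2 * bG" unfolding y2 using gG by (simp add: inner_add_right)
    have yF1: "aF \<bullet> y = s1 * (aF \<bullet> v) + t1 * bF" unfolding y1 using fF by (simp add: inner_add_right)
    have yF2: "aF \<bullet> y = s2 * (aF \<bullet> v) + t2 * (aF \<bullet> g)" unfolding y2 by (simp add: inner_add_right)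
    have m1: "t1 * (aG \<bullet> f) \<le> t1 * bG" using fF(2) s1(2) by (rule mult_left_mono)
    have m2: "t2 * (aF \<bullet> g) \<le> t2 * bF" using gG(2) s2(2) by (rule mult_left_mono)
    have t1: "t1 = 1 - s1" and t2: "t2 = 1 - s2" using s1(3) s2(3) by auto
    have i1: "s2 * (aG \<bullet> v) + (1 - s2) * bG \<le> s1 * (aG \<bullet> v) + (1 - s1) * bG"
      using yG1 yG2 m1 t1 t2 by simp
    have "s2 * al \<le> s1 * al" using i1 unfolding al_def by (simp add: algebra_simps)
    then have le1: "s2 \<le> s1" using alp by (rule mult_right_le_imp_le)
    have i2: "s1 * (aF \<bullet> v) + (1 - s1) * bF \<le> s2 * (aF \<bullet> v) + (1 - s2) * bF"
      using yF1 yF2 m2 t1 t2 by simp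
    have "s1 * be \<le> s2 * be" using i2 unfolding be_def by (simp add: algebra_simps)
    then have le2: "s1 \<le> s2" using bep by (rule mult_right_le_imp_le)
    have ss: "s2 = s1" using le1 le2 by simp
    have "c \<bullet> y = al * (s1 * (aF \<bullet> v) + (1 - s1) * bF) - be * (s1 * (aG \<bullet> v) + (1 - s1) * bG)"
      using cx[of y] yF1 yG2 ss t1 t2 by simp
    also have "\<dots> = e" unfolding al_def be_def e_def by (simp add: algebra_simps)
    finally show "y \<in> {x. c \<bullet> x = e}" by simp
  qed
  show ?thesis using negligible_hyperplane[of c e] c0 sub negligible_subset by blast
qed



lemma neg_sep:
  fixes a :: "real^'n::finite"
  assumes "a \<noteq> 0" "S \<subseteq> {x. a \<bullet> x \<le> b}" "T \<subseteq> {x. a \<bullet> x \<ge> b}"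
  shows "negligible (S \<inter> T)"
proof -
  have "S \<inter> T \<subseteq> {x. a \<bullet> x = b}" using assms(2,3) by fastforce
  then show ?thesis using negligible_hyperplane[of a b] assms(1) negligible_subset by blast
qed

theorem mainTheorem4:
  fixes P :: "(real ^ 'n) set"
  assumes "zero_one_polytope P"
    and "aff_dim P = int CARD('n)"
  shows "real (card {F. F facet_of P})
           \<le> 2 * real CARD('n) + fact CARD('n) * (1 - measure lebesgue P)"
proof -
  obtain V where V: "V \<subseteq> cube01" and PV: "P = convex hull V"
    using assms(1) unfolding zero_one_polytope_def by blast
  have finV: "finite V" using finite_subset[OF V finite_cube01] .
  have cP: "convex P" by (simp add: PV convex_convex_hull)
  have cptP: "compact P" unfolding PV using finV by (rule finite_imp_compact_convex_hull)
  have poly: "polytope P" unfolding polytope_def using finV PV by blast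
  have box: "P \<subseteq> cbox 0 1" unfolding PV
    using V cube01_box by (intro hull_minimal) (auto simp: convex_box)
  define Fc where "Fc = {F. F facet_of P}"
  have finFc: "finite Fc" unfolding Fc_def using poly by (rule finite_polytope_facets)
  have "\<forall>F\<in>Fc. \<exists>ab. fst ab \<noteq> 0 \<and> P \<subseteq> {x. fst ab \<bullet> x \<le> snd ab} \<and> F = P \<inter> {x. fst ab \<bullet> x = snd ab}"
  proof
    fix F assume "F \<in> Fc"
    then have "F facet_of P" by (simp add: Fc_def)
    then obtain a b where "a \<noteq> 0" "P \<subseteq> {x. a \<bullet> x \<le> b}" "F = P \<inter> {x. a \<bullet> x = b}"
      using facet_of_polyhedron[OF polytope_imp_polyhedron[OF poly]] by metis
    then show "\<exists>ab. fst ab \<noteq> 0 \<and> P \<subseteq> {x. fst ab \<bullet> x \<le> snd ab} \<and> F = P \<inter> {x. fst ab \<bullet> x = snd ab}"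
      by (intro exI[of _ "(a,b)"]) simp
  qed
  then obtain ab where ab: "\<And>F. F \<in> Fc \<Longrightarrow> fst (ab F) \<noteq> 0 \<and> P \<subseteq> {x. fst (ab F) \<bullet> x \<le> snd (ab F)} \<and> F = P \<inter> {x. fst (ab F) \<bullet> x = snd (ab F)}"
    using bchoice[of Fc] by metis
  define A where "A F = fst (ab F)" for F
  define B where "B F = snd (ab F)" for F
  have A0: "A F \<noteq> 0" if "F \<in> Fc" for F using ab[OF that] by (simp add: A_def)
  have hP: "P \<subseteq> {x. A F \<bullet> x \<le> B F}" if "F \<in> Fc" for F using ab[OF that] by (simp add: A_def B_def)
  have hF: "F = P \<inter> {x. A F \<bullet> x = B F}" if "F \<in> Fc" for F using ab[OF that] by (simp add: A_def B_def)
  define isT1 where "isT1 F \<longleftrightarrow> (\<exists>i c. (c = 0 \<or> c = 1) \<and> F \<subseteq> {x::real^'n. x$i = c})" for F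
  define T1 where "T1 = {F\<in>Fc. isT1 F}"
  define T2 where "T2 = {F\<in>Fc. \<not> isT1 F}"
  have FcU: "Fc = T1 \<union> T2" by (auto simp: T1_def T2_def)
  have finT1: "finite T1" using finFc by (simp add: T1_def)
  have finT2: "finite T2" using finFc by (simp add: T2_def)
  have cardFc: "card Fc \<le> card T1 + card T2" unfolding FcU by (rule card_Un_le)
  have "\<forall>F\<in>T1. \<exists>p. (snd p = 0 \<or> snd p = 1) \<and> F \<subseteq> {x::real^'n. x $ fst p = snd p}"
  proof
    fix F assume "F \<in> T1"
    then obtain i c where "(c = 0 \<or> c = 1)" "F \<subseteq> {x::real^'n. x$i = c}"
      by (auto simp: T1_def isT1_def)
    then show "\<exists>p. (snd p = 0 \<or> snd p = 1) \<and> F \<subseteq> {x::real^'n. x $ fst p = snd p}"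
      by (intro exI[of _ "(i,c)"]) simp
  qed
  then obtain ic where ic: "\<And>F. F \<in> T1 \<Longrightarrow> (snd (ic F) = 0 \<or> snd (ic F) = 1) \<and> F \<subseteq> {x::real^'n. x $ fst (ic F) = snd (ic F)}"
    using bchoice[of T1] by metis
  have inj: "inj_on ic T1"
  proof (rule inj_onI)
    fix F G assume F: "F \<in> T1" and G: "G \<in> T1" and eq: "ic F = ic G"
    have Ff: "F facet_of P" and Gf: "G facet_of P" using F G by (auto simp: T1_def Fc_def)
    show "F = G"
      using facet_cube_unique[OF cP assms(2) box Ff Gf, of "fst (ic F)" "snd (ic F)"]
        ic[OF F] ic[OF G] eq by simp
  qed
  have icr: "ic ` T1 \<subseteq> UNIV \<times> {0::real,1}"
  proof (rule image_subsetI)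
    fix F assume "F \<in> T1"
    then have "snd (ic F) = 0 \<or> snd (ic F) = 1" using ic by blast
    then show "ic F \<in> UNIV \<times> {0::real,1}" by (cases "ic F") auto
  qed
  have "card T1 \<le> card (UNIV \<times> {0::real,1} :: ('n \<times> real) set)"
    using card_inj_on_le[OF inj icr] by simp
  also have "\<dots> = CARD('n) * 2" by (simp add: card_cartesian_product)
  finally have cT1: "card T1 \<le> 2 * CARD('n)" by simp
  define N where "N = card (cube01::(real^'n) set)"
  obtain en where en: "bij_betw en {0..<N} (cube01::(real^'n) set)"
    using ex_bij_betw_nat_finite[OF finite_cube01] unfolding N_def by blast
  have enC: "en j \<in> cube01" if "j < N" for j using bij_betw_apply[OF en] that by simp
  have enS: "en ` {0..<N} = cube01" using en by (simp add: bij_betw_def)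
  have beyond: "\<exists>j. j < N \<and> A F \<bullet> en j > B F" if F: "F \<in> T2" for F
  proof (rule ccontr)
    assume na: "\<not> (\<exists>j. j < N \<and> A F \<bullet> en j > B F)"
    have le: "A F \<bullet> w \<le> B F" if wc: "w \<in> cube01" for w
    proof -
      have "w \<in> en ` {0..<N}" using wc enS by simp
      then obtain j where "j < N" "w = en j" by auto
      then show ?thesis using na by force
    qed
    have FFc: "F \<in> Fc" and nT: "\<not> isT1 F" using F by (auto simp: T2_def)
    have Ff: "F facet_of P" using FFc by (simp add: Fc_def)
    have "F \<subseteq> {x. A F \<bullet> x = B F}" using hF[OF FFc] by blast
    then have "isT1 F" unfolding isT1_def
      using exists_beyond[OF V PV Ff A0[OF FFc] _ le] by blast
    with nT show False ..
  qed
  define K where "K F = (LEAST j. j < N \<and> A F \<bullet> en j > B F)" for F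
  have K1: "K F < N \<and> A F \<bullet> en (K F) > B F" if "F \<in> T2" for F
    unfolding K_def using LeastI_ex[OF beyond[OF that]] .
  have K2: "A F \<bullet> en j \<le> B F" if "F \<in> T2" "j < K F" for F j
  proof -
    have "j < N" using K1[OF that(1)] that(2) by simp
    moreover have "\<not> (j < N \<and> A F \<bullet> en j > B F)"
      using not_less_Least[of j "\<lambda>j. j < N \<and> A F \<bullet> en j > B F"] that(2) unfolding K_def by blast
    ultimately show ?thesis by simp
  qed
  define Q where "Q F = convex hull (insert (en (K F)) F)" for F
  have T2Fc: "F \<in> Fc" if "F \<in> T2" for F using that by (simp add: T2_def)
  have T2f: "F facet_of P" if "F \<in> T2" for F using that by (simp add: T2_def Fc_def)
  have Fcpt: "compact F" if "F \<in> T2" for F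
    using face_of_imp_compact[OF cP cptP] T2f[OF that] facet_of_imp_face_of by blast
  have Qm: "Q F \<in> lmeasurable" if "F \<in> T2" for F
    unfolding Q_def using Fcpt[OF that] by (intro lmeasurable_compact compact_convex_hull compact_insert)
  have Qvol: "1 / fact CARD('n) \<le> measure lebesgue (Q F)" if "F \<in> T2" for F
  proof -
    have "F \<subseteq> {x. A F \<bullet> x = B F}" using hF[OF T2Fc[OF that]] by blast
    then show ?thesis unfolding Q_def
      using pyramid_vol[OF V PV T2f[OF that] assms(2) _ enC] K1[OF that] by blast
  qed
  have FP: "F \<subseteq> P" if "F \<in> T2" for F using T2f[OF that] facet_of_imp_subset by blast
  have Qbox: "Q F \<subseteq> cbox 0 1" if "F \<in> T2" for F
    unfolding Q_def using FP[OF that] box cube01_box enC K1[OF that]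
    by (intro hull_minimal) (auto simp: convex_box)
  have Qge: "Q F \<subseteq> {x. A F \<bullet> x \<ge> B F}" if "F \<in> T2" for F
  proof -
    have "F \<subseteq> {x. A F \<bullet> x = B F}" using hF[OF T2Fc[OF that]] by blast
    then have "insert (en (K F)) F \<subseteq> {x. A F \<bullet> x \<ge> B F}" using K1[OF that] by auto
    then show ?thesis unfolding Q_def by (rule hull_minimal) (rule convex_halfspace_ge)
  qed
  have Qle: "Q F \<subseteq> {x. A G \<bullet> x \<le> B G}" if "F \<in> T2" "G \<in> T2" "K F < K G" for F G
  proof -
    have "insert (en (K F)) F \<subseteq> {x. A G \<bullet> x \<le> B G}"
      using K2[OF that(2,3)] FP[OF that(1)] hP[OF T2Fc[OF that(2)]] by auto
    then show ?thesis unfolding Q_def by (rule hull_minimal) (rule convex_halfspace_le)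
  qed
  have PT2: "P \<notin> T2"
  proof
    assume "P \<in> T2"
    then have "P facet_of P" by (rule T2f)
    then show False by simp
  qed
  define fam where "fam X = (if X \<in> T2 then Q X else P)" for X
  define I where "I = insert P T2"
  have finI: "finite I" using finT2 by (simp add: I_def)
  have meas: "fam X \<in> lmeasurable" if "X \<in> I" for X
    using that Qm lmeasurable_compact[OF cptP] by (auto simp: fam_def I_def)
  have pairT2: "negligible (Q X \<inter> Q Y)" if X: "X \<in> T2" and Y: "Y \<in> T2" and ne: "X \<noteq> Y" for X Y
  proof (cases "K X < K Y")
    case True
    then show ?thesis using neg_sep[OF A0[OF T2Fc[OF Y]] Qle[OF X Y True] Qge[OF Y]] by simp
  next
    case False
    show ?thesis
    proof (cases "K Y < K X")
      case True
      then have "negligible (Q Y \<inter> Q X)"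
        using neg_sep[OF A0[OF T2Fc[OF X]] Qle[OF Y X True] Qge[OF X]] by simp
      then show ?thesis by (simp add: Int_commute)
    next
      case False
      with \<open>\<not> K X < K Y\<close> have KK: "K Y = K X" by simp
      have cX: "convex X" using T2f[OF X] facet_of_imp_face_of face_of_imp_convex by blast
      have cY: "convex Y" using T2f[OF Y] facet_of_imp_face_of face_of_imp_convex by blast
      have neX: "X \<noteq> {}" using T2f[OF X] by (simp add: facet_of_def)
      have neY: "Y \<noteq> {}" using T2f[OF Y] by (simp add: facet_of_def)
      have "negligible (convex hull (insert (en (K X)) X) \<inter> convex hull (insert (en (K X)) Y))"
        using same_apex[OF cX cY neX neY hF[OF T2Fc[OF X]] hF[OF T2Fc[OF Y]]
            hP[OF T2Fc[OF X]] hP[OF T2Fc[OF Y]] _ _ ne] K1[OF X] K1[OF Y] KK by simp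
      then show ?thesis unfolding Q_def KK .
    qed
  qed
  have pw: "pairwise (\<lambda>X Y. negligible (fam X \<inter> fam Y)) I"
    unfolding pairwise_def
  proof (intro ballI impI)
    fix X Y assume X: "X \<in> I" and Y: "Y \<in> I" and ne: "X \<noteq> Y"
    show "negligible (fam X \<inter> fam Y)"
    proof (cases "X \<in> T2")
      case XT: True
      show ?thesis
      proof (cases "Y \<in> T2")
        case True
        then show ?thesis using pairT2[OF XT True ne] XT by (simp add: fam_def)
      next
        case False
        have "negligible (P \<inter> Q X)"
          using neg_sep[OF A0[OF T2Fc[OF XT]] hP[OF T2Fc[OF XT]] Qge[OF XT]] .
        then show ?thesis using XT False by (simp add: fam_def Int_commute)
      qed
    next
      case XF: False
      then have "X = P" using X by (simp add: I_def)
      show ?thesis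
      proof (cases "Y \<in> T2")
        case True
        have "negligible (P \<inter> Q Y)"
          using neg_sep[OF A0[OF T2Fc[OF True]] hP[OF T2Fc[OF True]] Qge[OF True]] .
        then show ?thesis using XF True by (simp add: fam_def)
      next
        case False
        then have "Y = P" using Y by (simp add: I_def)
        with \<open>X = P\<close> ne show ?thesis by simp
      qed
    qed
  qed
  have U: "measure lebesgue (\<Union>(fam ` I)) = (\<Sum>X\<in>I. measure lebesgue (fam X))"
    by (rule measure_negligible_finite_Union_image[OF finI meas pw])
  have S: "(\<Sum>X\<in>I. measure lebesgue (fam X)) = measure lebesgue P + (\<Sum>X\<in>T2. measure lebesgue (Q X))"
    unfolding I_def using finT2 PT2 by (simp add: fam_def)
  have sub: "\<Union>(fam ` I) \<subseteq> cbox 0 1" using box Qbox by (auto simp: fam_def I_def)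
  have "measure lebesgue (\<Union>(fam ` I)) \<le> measure lebesgue (cbox 0 (1::real^'n))"
  proof (rule measure_mono_fmeasurable[OF sub])
    show "\<Union>(fam ` I) \<in> sets lebesgue"
      using fmeasurable.finite_UN[OF finI meas] by (rule fmeasurableD)
    show "cbox 0 1 \<in> lmeasurable" by simp
  qed
  then have tot: "measure lebesgue P + (\<Sum>X\<in>T2. measure lebesgue (Q X)) \<le> 1"
  proof -
    have "measure lebesgue (cbox 0 (1::real^'n)) = 1" by (rule measure_unit_cube)
    then show ?thesis using U S \<open>measure lebesgue (\<Union>(fam ` I)) \<le> measure lebesgue (cbox 0 (1::real^'n))\<close> by linarith
  qed
  have "real (card T2) * (1 / fact CARD('n)) \<le> (\<Sum>X\<in>T2. measure lebesgue (Q X))"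
    using sum_bounded_below[of T2 "1 / fact CARD('n)" "\<lambda>X. measure lebesgue (Q X)"] Qvol by blast
  then have "real (card T2) / fact CARD('n) \<le> 1 - measure lebesgue P" using tot by simp
  then have cT2: "real (card T2) \<le> fact CARD('n) * (1 - measure lebesgue P)"
    by (simp add: divide_le_eq mult.commute)
  have "real (card Fc) \<le> real (card T1) + real (card T2)" using cardFc by linarith
  also have "\<dots> \<le> 2 * real CARD('n) + fact CARD('n) * (1 - measure lebesgue P)"
    using cT1 cT2 by linarith
  finally show ?thesis by (simp add: Fc_def)
qed

end
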